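(* Let $W=(W(t))_{t\in[0,1]}$ be a standard Wiener process (Brownian motion) on $[0,1]$, and for natural $n$ let $x_n:=\sum_{k=1}^{n-1} W\big(\tfrac kn\big)$ and $y_n:=x_{n+1}-x_n$. Then, as $s\to\infty$ through the natural numbers, the distribution of the random variable $y_{4s}-y_{2s}$ converges to the centered normal distribution with variance $1/4$.
   Context: A standard Wiener process on $[0,1]$ is a centered Gaussian process with $W(0)=0$ and covariance $\mathbb{E}\,W(u)W(v)=\min(u,v)$ for $u,v\in[0,1]$. *)

theory Defs
  imports "HOL-Probability.Probability"
begin

definition centered_gaussian_rv :: "'a measure \<Rightarrow> ('a \<Rightarrow> real) \<Rightarrow> real \<Rightarrow> bool" where
  "centered_gaussian_rv M X v \<longleftrightarrow>
     X \<in> borel_measurable M \<and> 0 \<le> v \<and>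
     distr M borel X = (if v = 0 then return borel 0
                        else density lborel (\<lambda>x. ennreal (normal_density 0 (sqrt v) x)))"

text \<open>Standard Wiener process on [0,1]: a centered Gaussian process (every finite
 linear combination of its values is centered Gaussian) with W(0) = 0 and
 covariance E W(u) W(v) = min u v.\<close>
definition standard_wiener :: "'a measure \<Rightarrow> (real \<Rightarrow> 'a \<Rightarrow> real) \<Rightarrow> bool" where
  "standard_wiener M W \<longleftrightarrow>
     prob_space M \<and>
     (\<forall>t\<in>{0..1}. W t \<in> borel_measurable M) \<and>
     (AE \<omega> in M. W 0 \<omega> = 0) \<and>
     (\<forall>(n::nat) (t::nat \<Rightarrow> real) (c::nat \<Rightarrow> real). (\<forall>i<n. t i \<in> {0..1}) \<longrightarrow>
        centered_gaussian_rv M (\<lambda>\<omega>. \<Sum>i<n. c i * W (t i) \<omega>)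
          (\<Sum>i<n. \<Sum>j<n. c i * c j * min (t i) (t j)))"

definition wiener_x :: "(real \<Rightarrow> 'a \<Rightarrow> real) \<Rightarrow> nat \<Rightarrow> 'a \<Rightarrow> real" where
  "wiener_x W n \<omega> = (\<Sum>k=1..n-1. W (real k / real n) \<omega>)"

definition wiener_y :: "(real \<Rightarrow> 'a \<Rightarrow> real) \<Rightarrow> nat \<Rightarrow> 'a \<Rightarrow> real" where
  "wiener_y W n \<omega> = wiener_x W (n + 1) \<omega> - wiener_x W n \<omega>"

end

theory Submission
  imports Defs "HOL-Real_Asymp.Real_Asymp"
begin


definition Smin :: "nat \<Rightarrow> nat \<Rightarrow> real" where
  "Smin a b = (\<Sum>k=1..a-1. \<Sum>l=1..b-1. min (real k / real a) (real l / real b))"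

lemma Smin_sym: "Smin a b = Smin b a"
  unfolding Smin_def by (subst sum.swap) (simp add: min.commute)

lemma sum_k: "(\<Sum>k=1..n. real k) = real n * (real n + 1) / 2"
  by (induction n) (auto simp: field_simps)

lemma sum_k2: "(\<Sum>k=1..n. real k ^ 2) = real n * (real n + 1) * (2 * real n + 1) / 6"
  by (induction n) (auto simp: field_simps power2_eq_square)

lemma sum_poly: "(\<Sum>k=1..n. \<alpha> + \<beta> * real k + \<gamma> * real k ^ 2) =
   \<alpha> * real n + \<beta> * (real n * (real n + 1) / 2) + \<gamma> * (real n * (real n + 1) * (2 * real n + 1) / 6)"
proof -
  have "(\<Sum>k=1..n. \<alpha> + \<beta> * real k + \<gamma> * real k ^ 2) = (\<Sum>k=1..n. \<alpha>) + \<beta> * (\<Sum>k=1..n. real k) + \<gamma> * (\<Sum>k=1..n. real k ^ 2)"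
    by (simp only: sum.distrib sum_distrib_left)
  then show ?thesis unfolding sum_k sum_k2 by simp
qed

lemma inner:
  fixes a b k m :: nat
  assumes "a > 0" "b > 0" "m < b" "m * a \<le> k * b" "k * b < (m + 1) * a"
  shows "(\<Sum>l=1..b-1. min (real k / real a) (real l / real b)) =
     real m * (real m + 1) / (2 * real b) + real k / real a * (real b - 1 - real m)"
proof -
  have split: "{1..b-1} = {1..m} \<union> {m+1..b-1}" using assms by auto
  have "(\<Sum>l=1..b-1. min (real k / real a) (real l / real b)) =
     (\<Sum>l=1..m. min (real k / real a) (real l / real b)) + (\<Sum>l=m+1..b-1. min (real k / real a) (real l / real b))"
    unfolding split by (rule sum.union_disjoint) auto
  also have "(\<Sum>l=1..m. min (real k / real a) (real l / real b)) = (\<Sum>l=1..m. real l / real b)"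
  proof (rule sum.cong)
    fix l assume "l \<in> {1..m}"
    then have "l * a \<le> k * b" using assms(4) by (meson atLeastAtMost_iff le_trans mult_le_mono1)
    then have "real l * real a \<le> real k * real b" by (metis of_nat_le_iff of_nat_mult)
    then have "real l / real b \<le> real k / real a" using assms by (simp add: field_simps)
    then show "min (real k / real a) (real l / real b) = real l / real b" by simp
  qed simp
  also have "\<dots> = (\<Sum>l=1..m. real l) / real b"
    by (simp only: sum_divide_distrib)
  also have "\<dots> = real m * (real m + 1) / (2 * real b)"
    unfolding sum_k by simp
  also have "(\<Sum>l=m+1..b-1. min (real k / real a) (real l / real b)) = (\<Sum>l=m+1..b-1. real k / real a)"
  proof (rule sum.cong)
    fix l assume "l \<in> {m+1..b-1}"
    then have "k * b < l * a" using assms(5) by (meson atLeastAtMost_iff less_le_trans mult_le_mono1)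
    then have "real k * real b < real l * real a" by (metis of_nat_less_iff of_nat_mult)
    then have "real l / real b > real k / real a" using assms by (simp add: field_simps)
    then show "min (real k / real a) (real l / real b) = real k / real a" by simp
  qed simp
  also have "\<dots> = real k / real a * (real b - 1 - real m)"
    using assms by (simp add: of_nat_diff)
  finally show ?thesis .
qed

lemma Smin_eq:
  fixes m :: "nat \<Rightarrow> nat"
  assumes "a > 0" "b > 0" "\<And>k. k \<in> {1..a-1} \<Longrightarrow> m k < b \<and> real (m k) * real a \<le> real k * real b \<and> real k * real b < (real (m k) + 1) * real a"
  shows "Smin a b = (\<Sum>k=1..a-1. real (m k) * (real (m k) + 1) / (2 * real b) + real k / real a * (real b - 1 - real (m k)))"
  unfolding Smin_def
proof (intro sum.cong refl inner)
  fix k assume k: "k \<in> {1..a-1}"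
  have h: "real (m k * a) \<le> real (k * b)" "real (k * b) < real ((m k + 1) * a)" using assms(3)[OF k] by (simp_all add: algebra_simps)
  show "m k * a \<le> k * b" using h(1) by (simp only: of_nat_le_iff)
  show "k * b < (m k + 1) * a" using h(2) by (simp only: of_nat_less_iff)
qed (use assms in auto)

lemma S_nn: assumes "n \<ge> 1" shows "Smin n n = (real n - 1) * (2 * real n - 1) / 6"
proof -
  have "Smin n n = (\<Sum>k=1..n-1. real k * (real k + 1) / (2 * real n) + real k / real n * (real n - 1 - real k))"
    using assms by (intro Smin_eq[where m="\<lambda>k. k"]) auto
  also have "\<dots> = (\<Sum>k=1..n-1. 0 + (2*real n - 1)/(2*real n) * real k + (-1/(2*real n)) * real k ^ 2)"
    using assms by (intro sum.cong refl) (simp add: field_simps power2_eq_square)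
  also have "\<dots> = (real n - 1) * (2 * real n - 1) / 6"
    unfolding sum_poly using assms by (simp add: of_nat_diff field_simps)
  finally show ?thesis .
qed

lemma S_n1: assumes "n \<ge> 1" shows "Smin n (n+1) = (2*real n + 1)*(real n - 1)/6"
proof -
  have np: "real n > 0" "2*real n - 1 > 0" "2*real n + 1 > 0" "real n + 1 > 0" using assms by auto
  have "Smin n (n+1) = (\<Sum>k=1..n-1. real (k) * (real (k) + 1) / (2 * real (n+1)) + real k / real n * (real (n+1) - 1 - real (k)))"
    using assms by (intro Smin_eq[where m="\<lambda>k. k"]) (auto simp: algebra_simps)
  also have "\<dots> = (\<Sum>k=1..n-1. 0 + (1/(2*(real n+1)) + 1) * real k + (1/(2*(real n+1)) - 1/real n) * real k ^ 2)"
    using assms np by (intro sum.cong refl) (auto simp: of_nat_diff divide_simps; simp add: algebra_simps power2_eq_square)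
  also have "\<dots> = (2*real n + 1)*(real n - 1)/6"
    unfolding sum_poly using assms np by (simp add: of_nat_diff divide_simps; simp add: algebra_simps power2_eq_square)
  finally show ?thesis .
qed

lemma S_n2: assumes "n \<ge> 1" shows "Smin n (2*n) = (8*real n - 1)*(real n - 1)/12"
proof -
  have np: "real n > 0" "2*real n - 1 > 0" "2*real n + 1 > 0" "real n + 1 > 0" using assms by auto
  have "Smin n (2*n) = (\<Sum>k=1..n-1. real (2*k) * (real (2*k) + 1) / (2 * real (2*n)) + real k / real n * (real (2*n) - 1 - real (2*k)))"
    using assms by (intro Smin_eq[where m="\<lambda>k. 2*k"]) (auto simp: algebra_simps)
  also have "\<dots> = (\<Sum>k=1..n-1. 0 + (2 - 1/(2*real n)) * real k + (-1/real n) * real k ^ 2)"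
    using assms np by (intro sum.cong refl) (auto simp: of_nat_diff divide_simps; simp add: algebra_simps power2_eq_square)
  also have "\<dots> = (8*real n - 1)*(real n - 1)/12"
    unfolding sum_poly using assms np by (simp add: of_nat_diff divide_simps; simp add: algebra_simps power2_eq_square)
  finally show ?thesis .
qed

lemma S_n2p: assumes "n \<ge> 1" shows "Smin n (2*n+1) = (real n - 1)*(8*real n^2 + 7*real n + 2)/(6*(2*real n+1))"
proof -
  have np: "real n > 0" "2*real n - 1 > 0" "2*real n + 1 > 0" "real n + 1 > 0" using assms by auto
  have "Smin n (2*n+1) = (\<Sum>k=1..n-1. real (2*k) * (real (2*k) + 1) / (2 * real (2*n+1)) + real k / real n * (real (2*n+1) - 1 - real (2*k)))"
    using assms by (intro Smin_eq[where m="\<lambda>k. 2*k"]) (auto simp: algebra_simps)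
  also have "\<dots> = (\<Sum>k=1..n-1. 0 + (1/(2*real n+1) + 2) * real k + (2/(2*real n+1) - 2/real n) * real k ^ 2)"
    using assms np by (intro sum.cong refl) (auto simp: of_nat_diff divide_simps; simp add: algebra_simps power2_eq_square)
  also have "\<dots> = (real n - 1)*(8*real n^2 + 7*real n + 2)/(6*(2*real n+1))"
    unfolding sum_poly using assms np by (simp add: of_nat_diff divide_simps; simp add: algebra_simps power2_eq_square)
  finally show ?thesis .
qed

lemma S_n2m: assumes "n \<ge> 1" shows "Smin n (2*n-1) = (real n - 1)^2*(8*real n - 1)/(6*(2*real n-1))"
proof -
  have np: "real n > 0" "2*real n - 1 > 0" "2*real n + 1 > 0" "real n + 1 > 0" using assms by auto
  have "Smin n (2*n-1) = (\<Sum>k=1..n-1. real (2*k-1) * (real (2*k-1) + 1) / (2 * real (2*n-1)) + real k / real n * (real (2*n-1) - 1 - real (2*k-1)))"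
    using assms by (intro Smin_eq[where m="\<lambda>k. 2*k-1"]) (auto simp: algebra_simps of_nat_diff)
  also have "\<dots> = (\<Sum>k=1..n-1. 0 + (-1/(2*real n-1) + (2*real n-1)/real n) * real k + (2/(2*real n-1) - 2/real n) * real k ^ 2)"
    using assms np by (intro sum.cong refl) (auto simp: of_nat_diff divide_simps; simp add: algebra_simps power2_eq_square)
  also have "\<dots> = (real n - 1)^2*(8*real n - 1)/(6*(2*real n-1))"
    unfolding sum_poly using assms np by (simp add: of_nat_diff divide_simps; simp add: algebra_simps power2_eq_square)
  finally show ?thesis .
qed

lemma S_odd: assumes "s \<ge> 1" shows "Smin (2 * s + 1) (4 * s) = (64 * real s^3 + 28 * real s^2 - 7 * real s - 1)/(12 * (2 * real s + 1))"
proof -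
  have np: "real s > 0" "2 * real s + 1 > 0" using assms by auto
  define f where "f = (\<lambda>k. real ((\<lambda>k. if k \<le> s then 2 * k-1 else 2 * k-2) k) * (real ((\<lambda>k. if k \<le> s then 2 * k-1 else 2 * k-2) k) + 1) / (2 * real (4 * s))
     + real k / real (2 * s + 1) * (real (4 * s) - 1 - real ((\<lambda>k. if k \<le> s then 2 * k-1 else 2 * k-2) k)))"
  define g1 where "g1 = (\<lambda>k. 0 + (-1/(4 * real s) + 4 * real s/(2 * real s + 1)) * real k + (1/(2 * real s) - 2/(2 * real s + 1)) * real k ^ 2)"
  define g2 where "g2 = (\<lambda>k. 1/(4 * real s) + (-3/(4 * real s) + (4 * real s + 1)/(2 * real s + 1)) * real k + (1/(2 * real s) - 2/(2 * real s + 1)) * real k ^ 2)"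
  have un: "{1..2 * s} = {1..s} \<union> {s + 1..2 * s}" by auto
  have e1: "Smin (2 * s + 1) (4 * s) = (\<Sum>k=1..(2 * s + 1)-1. f k)"
    unfolding f_def using assms by (intro Smin_eq) (auto simp: algebra_simps of_nat_diff)
  have e2: "(\<Sum>k=1..(2 * s + 1)-1. f k) = (\<Sum>k=1..s. f k) + (\<Sum>k=s + 1..2 * s. f k)"
    unfolding diff_add_inverse2[of "2 * s" 1] un by (rule sum.union_disjoint) auto
  have e3: "(\<Sum>k=1..s. f k) = (\<Sum>k=1..s. g1 k)"
    unfolding f_def g1_def using np by (intro sum.cong refl) (auto simp: of_nat_diff divide_simps; simp add: algebra_simps power2_eq_square)
  have e4: "(\<Sum>k=s + 1..2 * s. f k) = (\<Sum>k=s + 1..2 * s. g2 k)"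
    unfolding f_def g2_def using np by (intro sum.cong refl) (auto simp: of_nat_diff divide_simps; simp add: algebra_simps power2_eq_square)
  have e5: "(\<Sum>k=s + 1..2 * s. g2 k) = (\<Sum>k=1..2 * s. g2 k) - (\<Sum>k=1..s. g2 k)"
    unfolding un by (subst sum.union_disjoint) auto
  have e6: "(\<Sum>k=1..s. g1 k) + ((\<Sum>k=1..2 * s. g2 k) - (\<Sum>k=1..s. g2 k)) = (64 * real s^3 + 28 * real s^2 - 7 * real s - 1)/(12 * (2 * real s + 1))"
    unfolding g1_def g2_def sum_poly using np by (simp add: divide_simps; simp add: algebra_simps power2_eq_square power3_eq_cube)
  show ?thesis using e1 e2 e3 e4 e5 e6 by simp
qed



lemma gauss_fin:
  fixes I :: "'b set"
  assumes W: "standard_wiener M W" and fin: "finite I" and t: "\<And>i. i \<in> I \<Longrightarrow> t i \<in> {0..1}"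
  shows "centered_gaussian_rv M (\<lambda>\<omega>. \<Sum>i\<in>I. c i * W (t i) \<omega>) (\<Sum>i\<in>I. \<Sum>j\<in>I. c i * c j * min (t i) (t j))"
proof -
  obtain h where h: "bij_betw h {0..<card I} I" using ex_bij_betw_nat_finite[OF fin] by blast
  have ht: "\<forall>i<card I. (t \<circ> h) i \<in> {0..1}" proof (intro allI impI)
    fix i assume "i < card I"
    then have "h i \<in> I" using h by (auto simp: bij_betw_def)
    then show "(t \<circ> h) i \<in> {0..1}" using t by simp
  qed
  have "centered_gaussian_rv M (\<lambda>\<omega>. \<Sum>i<card I. (c \<circ> h) i * W ((t \<circ> h) i) \<omega>)
     (\<Sum>i<card I. \<Sum>j<card I. (c \<circ> h) i * (c \<circ> h) j * min ((t \<circ> h) i) ((t \<circ> h) j))"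
    using W ht unfolding standard_wiener_def by blast
  moreover have "\<And>\<omega>. (\<Sum>i<card I. (c \<circ> h) i * W ((t \<circ> h) i) \<omega>) = (\<Sum>i\<in>I. c i * W (t i) \<omega>)"
    using sum.reindex_bij_betw[OF h, of "\<lambda>i. c i * W (t i) _"] by (simp add: atLeast0LessThan)
  moreover have "(\<Sum>i<card I. \<Sum>j<card I. (c \<circ> h) i * (c \<circ> h) j * min ((t \<circ> h) i) ((t \<circ> h) j)) = (\<Sum>i\<in>I. \<Sum>j\<in>I. c i * c j * min (t i) (t j))"
    using sum.reindex_bij_betw[OF h, of "\<lambda>i. \<Sum>j\<in>I. c i * c j * min (t i) (t j)"]
      sum.reindex_bij_betw[OF h, of "\<lambda>j. c _ * c j * min (t _) (t j)"]
    by (simp add: atLeast0LessThan)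
  ultimately show ?thesis by simp
qed



lemma sumS:
  assumes "finite A" "\<And>b. finite (B b)"
  shows "(\<Sum>i\<in>Sigma A B. g i) = (\<Sum>b\<in>A. \<Sum>k\<in>B b. g (b, k))"
  using assms by (subst sum.Sigma) (auto simp: case_prod_beta')

lemma double_Sigma:
  fixes F :: "nat \<Rightarrow> nat \<Rightarrow> nat \<Rightarrow> nat \<Rightarrow> real"
  assumes "finite A" "\<And>b. finite (B b)"
  shows "(\<Sum>i\<in>Sigma A B. \<Sum>j\<in>Sigma A B. F (fst i) (snd i) (fst j) (snd j)) =
     (\<Sum>b\<in>A. \<Sum>b'\<in>A. \<Sum>k\<in>B b. \<Sum>l\<in>B b'. F b k b' l)"
proof -
  have "(\<Sum>i\<in>Sigma A B. \<Sum>j\<in>Sigma A B. F (fst i) (snd i) (fst j) (snd j)) =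
        (\<Sum>i\<in>Sigma A B. \<Sum>b'\<in>A. \<Sum>l\<in>B b'. F (fst i) (snd i) b' l)"
    using assms by (simp add: sumS)
  also have "\<dots> = (\<Sum>b\<in>A. \<Sum>k\<in>B b. \<Sum>b'\<in>A. \<Sum>l\<in>B b'. F b k b' l)"
    using assms by (simp add: sumS)
  also have "\<dots> = (\<Sum>b\<in>A. \<Sum>b'\<in>A. \<Sum>k\<in>B b. \<Sum>l\<in>B b'. F b k b' l)"
    by (rule sum.cong[OF refl], rule sum.swap)
  finally show ?thesis .
qed

lemma alg: fixes x :: real assumes "x > 0"
  shows "(4*x+1 - 1) * (2 * (4*x+1) - 1) / 6 + (4*x - 1) * (2 * (4*x) - 1) / 6 + (2*x+1 - 1) * (2 * (2*x+1) - 1) / 6 + (2*x - 1) * (2 * (2*x) - 1) / 6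
     + 2 * (- ((2*(4*x) + 1)*((4*x) - 1)/6) - ((2*x+1) - 1)^2*(8*(2*x+1) - 1)/(6*(2*(2*x+1)-1)) + ((2*x) - 1)*(8*(2*x)^2 + 7*(2*x) + 2)/(6*(2*(2*x)+1)) + (64 * x^3 + 28 * x^2 - 7 * x - 1)/(12 * (2 * x + 1))
            - (8*(2*x) - 1)*((2*x) - 1)/12 - (2*(2*x) + 1)*((2*x) - 1)/6)
     = x * (4 * x + 3) / (2 * (2 * x + 1) * (4 * x + 1))"
proof -
  have h: "2*x+1 > 0" "4*x+1 > 0" "2*(2*x+1)-1 > 0" "2*(2*x)+1 > 0" using assms by auto
  have e: "2*(2*x+1)-1 = 4*x+1" by simp
  show ?thesis unfolding e using h by (simp add: divide_simps) (simp add: algebra_simps power2_eq_square power3_eq_cube)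
qed

lemma Y_gauss:
  assumes W: "standard_wiener M W" and s: "s \<ge> 1"
  shows "centered_gaussian_rv M (\<lambda>\<omega>. wiener_y W (4 * s) \<omega> - wiener_y W (2 * s) \<omega>)
            (real s * (4 * real s + 3) / (2 * (2 * real s + 1) * (4 * real s + 1)))"
proof -
  define N where "N = (\<lambda>b::nat. if b = 0 then 4 * s + 1 else if b = 1 then 4 * s else if b = 2 then 2 * s + 1 else 2 * s)"
  define e where "e = (\<lambda>b::nat. if b = 0 \<or> b = 3 then 1 else - 1 :: real)"
  define I where "I = Sigma {..<4::nat} (\<lambda>b. {1..N b - 1})"
  define c where "c = (\<lambda>i::nat \<times> nat. e (fst i))"
  define t where "t = (\<lambda>i::nat \<times> nat. real (snd i) / real (N (fst i)))"
  have four: "{..<4::nat} = {0,1,2,3}" by auto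
  have fin: "finite I" unfolding I_def by auto
  have tI: "t i \<in> {0..1}" if "i \<in> I" for i
    using that unfolding I_def t_def by (auto simp: divide_simps N_def split: if_splits)
  have G: "centered_gaussian_rv M (\<lambda>\<omega>. \<Sum>i\<in>I. c i * W (t i) \<omega>) (\<Sum>i\<in>I. \<Sum>j\<in>I. c i * c j * min (t i) (t j))"
    by (rule gauss_fin[OF W fin tI])
  have rv: "(\<Sum>i\<in>I. c i * W (t i) \<omega>) = wiener_y W (4 * s) \<omega> - wiener_y W (2 * s) \<omega>" for \<omega>
  proof -
    have "(\<Sum>i\<in>I. c i * W (t i) \<omega>) = (\<Sum>b<4. \<Sum>k=1..N b - 1. e b * W (real k / real (N b)) \<omega>)"
      unfolding I_def c_def t_def by (subst sumS) auto
    also have "\<dots> = wiener_y W (4 * s) \<omega> - wiener_y W (2 * s) \<omega>"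
      unfolding four wiener_y_def wiener_x_def by (simp add: N_def e_def sum_negf)
    finally show ?thesis .
  qed
  have var: "(\<Sum>i\<in>I. \<Sum>j\<in>I. c i * c j * min (t i) (t j)) = (\<Sum>b<4. \<Sum>b'<4. e b * e b' * Smin (N b) (N b'))"
  proof -
    have "(\<Sum>i\<in>I. \<Sum>j\<in>I. c i * c j * min (t i) (t j)) =
       (\<Sum>b<4. \<Sum>b'<4. \<Sum>k=1..N b - 1. \<Sum>l=1..N b' - 1. e b * e b' * min (real k / real (N b)) (real l / real (N b')))"
      unfolding I_def c_def t_def by (rule double_Sigma) auto
    also have "\<dots> = (\<Sum>b<4. \<Sum>b'<4. e b * e b' * Smin (N b) (N b'))"
      unfolding Smin_def by (simp add: sum_distrib_left)
    finally show ?thesis .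
  qed
  have n1: "2 * (2 * s + 1) - 1 = 4 * s + 1" by simp
  have n2: "2 * (2 * s) + 1 = 4 * s + 1" by simp
  have n3: "2 * (2 * s) = 4 * s" by simp
  have c1: "Smin (4* s+1) (4* s+1) = (real (4* s+1) - 1) * (2 * real (4* s+1) - 1) / 6" by (rule S_nn) simp
  have c2: "Smin (4* s) (4* s) = (real (4* s) - 1) * (2 * real (4* s) - 1) / 6" by (rule S_nn) (use s in simp)
  have c3: "Smin (2* s+1) (2* s+1) = (real (2* s+1) - 1) * (2 * real (2* s+1) - 1) / 6" by (rule S_nn) simp
  have c4: "Smin (2* s) (2* s) = (real (2* s) - 1) * (2 * real (2* s) - 1) / 6" by (rule S_nn) (use s in simp)
  have c5: "Smin (4* s) (4* s+1) = (2*real (4* s) + 1)*(real (4* s) - 1)/6" by (rule S_n1) (use s in simp)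
  have c6: "Smin (2* s) (2* s+1) = (2*real (2* s) + 1)*(real (2* s) - 1)/6" by (rule S_n1) (use s in simp)
  have c7: "Smin (2* s+1) (4* s+1) = (real (2* s+1) - 1)^2*(8*real (2* s+1) - 1)/(6*(2*real (2* s+1)-1))"
    using S_n2m[of "2* s+1"] unfolding n1 by simp
  have c8: "Smin (2* s) (4* s+1) = (real (2* s) - 1)*(8*real (2* s)^2 + 7*real (2* s) + 2)/(6*(2*real (2* s)+1))"
    using S_n2p[of "2* s"] s unfolding n2 by simp
  have c9: "Smin (2* s) (4* s) = (8*real (2* s) - 1)*(real (2* s) - 1)/12"
    using S_n2[of "2* s"] s unfolding n3 by simp
  have c10: "Smin (2 * s + 1) (4 * s) = (64 * real s^3 + 28 * real s^2 - 7 * real s - 1)/(12 * (2 * real s + 1))"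
    using S_odd[OF s] .
  have sym: "Smin (4* s+1) (4* s) = Smin (4* s) (4* s+1)" "Smin (4* s+1) (2* s+1) = Smin (2* s+1) (4* s+1)"
    "Smin (4* s+1) (2* s) = Smin (2* s) (4* s+1)" "Smin (4* s) (2* s+1) = Smin (2* s+1) (4* s)"
    "Smin (4* s) (2* s) = Smin (2* s) (4* s)" "Smin (2* s+1) (2* s) = Smin (2* s) (2* s+1)"
    by (rule Smin_sym)+
  have sp: "real s > 0" using s by simp
  have "(\<Sum>b<4. \<Sum>b'<4. e b * e b' * Smin (N b) (N b')) =
     Smin (4* s+1) (4* s+1) + Smin (4* s) (4* s) + Smin (2* s+1) (2* s+1) + Smin (2* s) (2* s)
     + 2 * (- Smin (4* s) (4* s+1) - Smin (2* s+1) (4* s+1) + Smin (2* s) (4* s+1) + Smin (2 * s + 1) (4 * s)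
            - Smin (2* s) (4* s) - Smin (2* s) (2* s+1))"
    unfolding four by (simp add: N_def e_def sym[simplified])
  also have "\<dots> = real s * (4 * real s + 3) / (2 * (2 * real s + 1) * (4 * real s + 1))"
    unfolding c1 c2 c3 c4 c5 c6 c7 c8 c9 c10 using sp
    unfolding c1 c2 c3 c4 c5 c6 c7 c8 c9 c10
    by (simp only: of_nat_add of_nat_mult of_nat_numeral of_nat_1) (rule alg[OF sp])
  finally have "(\<Sum>i\<in>I. \<Sum>j\<in>I. c i * c j * min (t i) (t j)) = real s * (4 * real s + 3) / (2 * (2 * real s + 1) * (4 * real s + 1))"
    using var by simp
  with G rv show ?thesis by simp
qed



lemma normal_integral:
  fixes f :: "real \<Rightarrow> real"
  assumes sg: "\<sigma> > 0" and f: "f \<in> borel_measurable borel"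
  shows "integral\<^sup>L (density lborel (\<lambda>x. ennreal (normal_density 0 \<sigma> x))) f =
         integral\<^sup>L (density lborel (\<lambda>x. ennreal (std_normal_density x))) (\<lambda>x. f (\<sigma> * x))"
proof -
  let ?N = "density lborel (\<lambda>x. ennreal (std_normal_density x))"
  interpret N: prob_space ?N by (rule prob_space_normal_density) simp
  have "distributed ?N lborel (\<lambda>x. x) std_normal_density"
    unfolding distributed_def by (auto simp: distr_id2)
  from N.normal_density_affine[OF this, where \<alpha>=\<sigma> and \<beta>=0] sg
  have "distributed ?N lborel (\<lambda>x. \<sigma> * x) (normal_density 0 \<sigma>)" by simp
  then have d: "distr ?N lborel (\<lambda>x. \<sigma> * x) = density lborel (\<lambda>x. ennreal (normal_density 0 \<sigma> x))"
    unfolding distributed_def by simp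
  have "integral\<^sup>L (distr ?N lborel (\<lambda>x. \<sigma> * x)) f = integral\<^sup>L ?N (\<lambda>x. f (\<sigma> * x))"
    using f by (intro integral_distr) auto
  then show ?thesis unfolding d .
qed

lemma v_lim: "(\<lambda>n. sqrt (real (Suc n) * (4 * real (Suc n) + 3) / (2 * (2 * real (Suc n) + 1) * (4 * real (Suc n) + 1)))) \<longlonglongrightarrow> 1/2"
proof -
  have "(\<lambda>n. real (Suc n) * (4 * real (Suc n) + 3) / (2 * (2 * real (Suc n) + 1) * (4 * real (Suc n) + 1))) \<longlonglongrightarrow> 1/4"
    by real_asymp
  from tendsto_real_sqrt[OF this] show ?thesis by (simp add: real_sqrt_divide)
qed

theorem lemma1:
  fixes M :: "'a measure" and W :: "real \<Rightarrow> 'a \<Rightarrow> real"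
  assumes "standard_wiener M W"
  shows "weak_conv_m (\<lambda>s. distr M borel (\<lambda>\<omega>. wiener_y W (4 * s) \<omega> - wiener_y W (2 * s) \<omega>))
           (density lborel (\<lambda>x. ennreal (normal_density 0 (1/2) x)))"
proof -
  define Y where "Y = (\<lambda>s \<omega>. wiener_y W (4 * s) \<omega> - wiener_y W (2 * s) \<omega>)"
  define v where "v = (\<lambda>s::nat. real s * (4 * real s + 3) / (2 * (2 * real s + 1) * (4 * real s + 1)))"
  let ?N = "density lborel (\<lambda>x. ennreal (std_normal_density x))"
  interpret N: prob_space ?N by (rule prob_space_normal_density) simp
  interpret P: prob_space M using assms unfolding standard_wiener_def by simp
  have vpos: "v s > 0" if "s \<ge> 1" for s using that unfolding v_def by (auto intro!: divide_pos_pos)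
  have G: "centered_gaussian_rv M (Y s) (v s)" if "s \<ge> 1" for s
    unfolding Y_def v_def by (rule Y_gauss[OF assms that])
  have meas: "Y s \<in> borel_measurable M" for s
  proof (cases "s = 0")
    case True then show ?thesis unfolding Y_def by simp
  next
    case False then show ?thesis using G[of s] unfolding centered_gaussian_rv_def by simp
  qed
  have dist: "distr M borel (Y s) = density lborel (\<lambda>x. ennreal (normal_density 0 (sqrt (v s)) x))" if "s \<ge> 1" for s
    using G[OF that] vpos[OF that] unfolding centered_gaussian_rv_def by simp
  have "weak_conv_m (\<lambda>s. distr M borel (Y s)) (density lborel (\<lambda>x. ennreal (normal_density 0 (1/2) x)))"
  proof (rule integral_bdd_continuous_conv_imp_weak_conv)
    show "real_distribution (distr M borel (Y s))" for s
      using meas by (intro P.real_distribution_distr) simp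
    show "real_distribution (density lborel (\<lambda>x. ennreal (normal_density 0 (1/2) x)))"
      unfolding real_distribution_def real_distribution_axioms_def by (auto intro: prob_space_normal_density)
    fix f :: "real \<Rightarrow> real"
    assume cont: "\<And>x. isCont f x" and bnd: "\<And>x. \<bar>f x\<bar> \<le> 1"
    have fm: "f \<in> borel_measurable borel"
      using cont by (intro borel_measurable_continuous_onI) (simp add: continuous_at_imp_continuous_on)
    have lim: "(\<lambda>n. integral\<^sup>L ?N (\<lambda>x. f (sqrt (v (Suc n)) * x))) \<longlonglongrightarrow> integral\<^sup>L ?N (\<lambda>x. f (1/2 * x))"
    proof (rule integral_dominated_convergence[where w="\<lambda>_. 1"])
      show "(\<lambda>x. f (1/2 * x)) \<in> borel_measurable ?N" using fm by simp
      show "(\<lambda>x. f (sqrt (v (Suc n)) * x)) \<in> borel_measurable ?N" for n using fm by simp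
      show "integrable ?N (\<lambda>_. 1::real)" by simp
      show "AE x in ?N. (\<lambda>n. f (sqrt (v (Suc n)) * x)) \<longlonglongrightarrow> f (1/2 * x)"
      proof (intro AE_I2 isCont_tendsto_compose[OF cont] tendsto_mult_right)
        show "(\<lambda>n. sqrt (v (Suc n))) \<longlonglongrightarrow> 1/2" using v_lim unfolding v_def .
      qed
      show "AE x in ?N. norm (f (sqrt (v (Suc n)) * x)) \<le> 1" for n using bnd by simp
    qed
    have eq1: "integral\<^sup>L (distr M borel (Y (Suc n))) f = integral\<^sup>L ?N (\<lambda>x. f (sqrt (v (Suc n)) * x))" for n
      using dist[of "Suc n"] vpos[of "Suc n"] normal_integral[OF _ fm, of "sqrt (v (Suc n))"] by simp
    have eq2: "integral\<^sup>L (density lborel (\<lambda>x. ennreal (normal_density 0 (1/2) x))) f = integral\<^sup>L ?N (\<lambda>x. f (1/2 * x))"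
      using normal_integral[OF _ fm, of "1/2"] by simp
    have "(\<lambda>n. integral\<^sup>L (distr M borel (Y (Suc n))) f) \<longlonglongrightarrow> integral\<^sup>L (density lborel (\<lambda>x. ennreal (normal_density 0 (1/2) x))) f"
      unfolding eq1 eq2 by (rule lim)
    then show "(\<lambda>n. integral\<^sup>L (distr M borel (Y n)) f) \<longlonglongrightarrow> integral\<^sup>L (density lborel (\<lambda>x. ennreal (normal_density 0 (1/2) x))) f"
      by (rule LIMSEQ_imp_Suc)
  qed
  then show ?thesis unfolding Y_def .
qed


end
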